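(* There is an absolute constant $C_0>0$ such that for every nonconstant harmonic function $u:\mathbb{C}\to\mathbb{R}$ there exists a sequence of discs $D(z_n,r_n)$ ($z_n\in\mathbb{C}$, $r_n>0$) with $u(z_n)=0$ and $M(|u|,z_n,r_n)\le C_0\,M(u,z_n,\tfrac34 r_n)$ for all $n$, and $\lim_{n\to\infty}M(u,z_n,r_n)=+\infty$.
   Context: For a real function $h$, $M(h,z,r)=\sup_{D(z,r)}h$ denotes the supremum of $h$ over the disc $D(z,r)$ of center $z$ and radius $r$. *)

theory Defs
  imports "HOL-Analysis.Analysis"
begin

definition harmonic :: "(complex \<Rightarrow> real) \<Rightarrow> bool" where
  "harmonic u \<longleftrightarrow>
     (\<exists>Du D2u.
        (\<forall>z. (u has_derivative Du z) (at z)) \<and>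
        (\<forall>z v. ((\<lambda>w. Du w v) has_derivative (\<lambda>h. D2u z h v)) (at z)) \<and>
        (\<forall>h v. continuous_on UNIV (\<lambda>z. D2u z h v)) \<and>
        (\<forall>z. D2u z 1 1 + D2u z \<i> \<i> = 0))"

definition Msup :: "(complex \<Rightarrow> real) \<Rightarrow> complex \<Rightarrow> real \<Rightarrow> real" where
  "Msup h z r = (SUP w\<in>ball z r. h w)"

end

theory Submission
  imports Defs "HOL-Complex_Analysis.Complex_Analysis"
begin

lemma line_deriv:
  fixes u :: "complex \<Rightarrow> real"
  assumes "\<And>z. (u has_derivative Du z) (at z)"
  shows "((\<lambda>s::real. u (c + s *\<^sub>R a)) has_real_derivative Du (c + s *\<^sub>R a) a) (at s)"
proof -
  have l: "linear (Du (c + s *\<^sub>R a))" using assms has_derivative_linear by blast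
  have "((\<lambda>s::real. c + s *\<^sub>R a) has_derivative (\<lambda>h. h *\<^sub>R a)) (at s)"
    by (auto intro!: derivative_eq_intros)
  then have "((\<lambda>s::real. u (c + s *\<^sub>R a)) has_derivative (\<lambda>h. Du (c + s *\<^sub>R a) (h *\<^sub>R a))) (at s)"
    using has_derivative_compose[OF _ assms] by blast
  moreover have "(\<lambda>h. Du (c + s *\<^sub>R a) (h *\<^sub>R a)) = (*) (Du (c + s *\<^sub>R a) a)"
    using linear_cmul[OF l] by (auto simp: mult.commute)
  ultimately show ?thesis by (simp add: has_field_derivative_def)
qed

lemma aux_abs: "(X::real) = Y \<Longrightarrow> \<bar>X - P\<bar> < \<bar>Q - P\<bar> / 2 \<Longrightarrow> \<bar>Y - Q\<bar> < \<bar>Q - P\<bar> / 2 \<Longrightarrow> False"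
  by (cases "Q \<ge> P"; cases "X \<ge> P"; cases "Y \<ge> Q") auto

lemma sym2:
  fixes u :: "complex \<Rightarrow> real"
  assumes H1: "\<And>z. (u has_derivative Du z) (at z)"
    and H2: "\<And>z v. ((\<lambda>w. Du w v) has_derivative (\<lambda>h. D2u z h v)) (at z)"
    and H3: "\<And>h v. continuous_on UNIV (\<lambda>z. D2u z h v)"
  shows "D2u z a b = D2u z b a"
proof -
  define \<Delta> where "\<Delta> t = u (z + t *\<^sub>R a + t *\<^sub>R b) - u (z + t *\<^sub>R a) - u (z + t *\<^sub>R b) + u z" for t :: real
  have key: "\<exists>\<xi>. norm (\<xi> - z) \<le> t * (norm a + norm b) \<and> u (z + t *\<^sub>R a + t *\<^sub>R b) - u (z + t *\<^sub>R a) - u (z + t *\<^sub>R b) + u z = t\<^sup>2 * D2u \<xi> b a"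
    if t: "t > 0" for t a b
  proof -
    define g where "g s = u ((z + t *\<^sub>R b) + s *\<^sub>R a) - u (z + s *\<^sub>R a)" for s
    have "\<And>x. 0 \<le> x \<Longrightarrow> x \<le> t \<Longrightarrow> (g has_real_derivative (Du ((z + t *\<^sub>R b) + x *\<^sub>R a) a - Du (z + x *\<^sub>R a) a)) (at x)"
      unfolding g_def by (auto intro!: derivative_eq_intros line_deriv[OF H1])
    from MVT2[OF t this] obtain \<sigma> where \<sigma>: "0 < \<sigma>" "\<sigma> < t"
      "g t - g 0 = (t - 0) * (Du ((z + t *\<^sub>R b) + \<sigma> *\<^sub>R a) a - Du (z + \<sigma> *\<^sub>R a) a)" by blast
    define k where "k \<tau> = Du ((z + \<sigma> *\<^sub>R a) + \<tau> *\<^sub>R b) a" for \<tau>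
    have "\<And>x. 0 \<le> x \<Longrightarrow> x \<le> t \<Longrightarrow> (k has_real_derivative D2u ((z + \<sigma> *\<^sub>R a) + x *\<^sub>R b) b a) (at x)"
      unfolding k_def using line_deriv[OF H2] by blast
    from MVT2[OF t this] obtain \<tau> where \<tau>: "0 < \<tau>" "\<tau> < t"
      "k t - k 0 = (t - 0) * D2u ((z + \<sigma> *\<^sub>R a) + \<tau> *\<^sub>R b) b a" by blast
    have "u (z + t *\<^sub>R a + t *\<^sub>R b) - u (z + t *\<^sub>R a) - u (z + t *\<^sub>R b) + u z = g t - g 0" unfolding g_def by (simp add: algebra_simps)
    also have "\<dots> = t * (k t - k 0)" using \<sigma>(3) unfolding k_def by (simp add: algebra_simps)
    also have "\<dots> = t\<^sup>2 * D2u ((z + \<sigma> *\<^sub>R a) + \<tau> *\<^sub>R b) b a" using \<tau>(3) by (simp add: power2_eq_square)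
    finally have e: "u (z + t *\<^sub>R a + t *\<^sub>R b) - u (z + t *\<^sub>R a) - u (z + t *\<^sub>R b) + u z = t\<^sup>2 * D2u ((z + \<sigma> *\<^sub>R a) + \<tau> *\<^sub>R b) b a" .
    have "norm ((z + \<sigma> *\<^sub>R a) + \<tau> *\<^sub>R b - z) \<le> \<sigma> * norm a + \<tau> * norm b"
    proof -
      have "norm ((z + \<sigma> *\<^sub>R a) + \<tau> *\<^sub>R b - z) = norm (\<sigma> *\<^sub>R a + \<tau> *\<^sub>R b)" by simp
      also have "\<dots> \<le> norm (\<sigma> *\<^sub>R a) + norm (\<tau> *\<^sub>R b)" by (rule norm_triangle_ineq)
      also have "\<dots> = \<sigma> * norm a + \<tau> * norm b" using \<sigma> \<tau> by simp
      finally show ?thesis .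
    qed
    also have "\<dots> \<le> t * (norm a + norm b)" using \<sigma> \<tau>
      by (simp add: distrib_left add_mono mult_right_mono)
    finally show ?thesis using e by blast
  qed
  show ?thesis
  proof (rule ccontr)
    assume ne: "D2u z a b \<noteq> D2u z b a"
    define \<epsilon> where "\<epsilon> = \<bar>D2u z a b - D2u z b a\<bar> / 2"
    have \<epsilon>: "\<epsilon> > 0" using ne by (simp add: \<epsilon>_def)
    obtain d1 where d1: "d1 > 0" "\<And>\<xi>. dist \<xi> z < d1 \<Longrightarrow> dist (D2u \<xi> b a) (D2u z b a) < \<epsilon>"
      using H3[of b a] \<epsilon> unfolding continuous_on_iff by (metis UNIV_I)
    obtain d2 where d2: "d2 > 0" "\<And>\<xi>. dist \<xi> z < d2 \<Longrightarrow> dist (D2u \<xi> a b) (D2u z a b) < \<epsilon>"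
      using H3[of a b] \<epsilon> unfolding continuous_on_iff by (metis UNIV_I)
    define t where "t = min d1 d2 / (2 * (norm a + norm b + 1))"
    have pos: "norm a + norm b + 1 > 0" using norm_ge_zero[of a] norm_ge_zero[of b] by linarith
    have t: "t > 0" unfolding t_def using d1(1) d2(1) pos by (intro divide_pos_pos) auto
    have tb: "t * (norm a + norm b) < min d1 d2"
    proof -
      have "t * (norm a + norm b) < t * (norm a + norm b + 1)" using t by simp
      also have "\<dots> = min d1 d2 / 2" unfolding t_def
        using pos by (simp add: field_simps)
      finally show ?thesis using d1 d2 by simp
    qed
    obtain \<xi>1 where x1: "norm (\<xi>1 - z) \<le> t * (norm a + norm b)" "\<Delta> t = t\<^sup>2 * D2u \<xi>1 b a"
      using key[OF t, of a b] unfolding \<Delta>_def by blast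
    have eqD: "\<Delta> t = u (z + t *\<^sub>R b + t *\<^sub>R a) - u (z + t *\<^sub>R b) - u (z + t *\<^sub>R a) + u z"
      unfolding \<Delta>_def by (simp add: add_ac)
    obtain \<xi>2 where x2: "norm (\<xi>2 - z) \<le> t * (norm b + norm a)" "\<Delta> t = t\<^sup>2 * D2u \<xi>2 a b"
      using key[OF t, of b a] eqD by auto
    have "D2u \<xi>1 b a = D2u \<xi>2 a b" using x1(2) x2(2) t by simp
    moreover have "dist (D2u \<xi>1 b a) (D2u z b a) < \<epsilon>"
      using d1(2) x1(1) tb by (simp add: dist_norm)
    moreover have "dist (D2u \<xi>2 a b) (D2u z a b) < \<epsilon>"
      using d2(2) x2(1) tb by (simp add: dist_norm add.commute)
    ultimately show False unfolding \<epsilon>_def dist_real_def using aux_abs by blast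
  qed
qed

lemma lin_decomp:
  fixes L :: "complex \<Rightarrow> real"
  assumes "linear L"
  shows "L h = Re h * L 1 + Im h * L \<i>"
proof -
  have "h = Re h *\<^sub>R 1 + Im h *\<^sub>R \<i>" by (simp add: complex_eq_iff)
  then have "L h = L (Re h *\<^sub>R 1 + Im h *\<^sub>R \<i>)" by simp
  also have "\<dots> = Re h * L 1 + Im h * L \<i>"
    using assms by (simp add: linear_add linear_cmul)
  finally show ?thesis .
qed

lemma harmonic_re:
  assumes "harmonic u"
  shows "\<exists>f. f holomorphic_on UNIV \<and> (\<forall>z. Re (f z) = u z)"
proof -
  obtain Du D2u where H1: "\<And>z. (u has_derivative Du z) (at z)"
    and H2: "\<And>z v. ((\<lambda>w. Du w v) has_derivative (\<lambda>h. D2u z h v)) (at z)"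
    and H3: "\<And>h v. continuous_on UNIV (\<lambda>z. D2u z h v)"
    and H4: "\<And>z. D2u z 1 1 + D2u z \<i> \<i> = 0"
    using assms unfolding harmonic_def by blast
  define F where "F z = complex_of_real (Du z 1) - \<i> * complex_of_real (Du z \<i>)" for z
  have dF: "(F has_field_derivative (complex_of_real (D2u z 1 1) - \<i> * complex_of_real (D2u z 1 \<i>))) (at z)" for z
  proof -
    have d: "(F has_derivative (\<lambda>h. complex_of_real (D2u z h 1) - \<i> * complex_of_real (D2u z h \<i>))) (at z)"
      unfolding F_def by (auto intro!: derivative_eq_intros H2)
    have l1: "linear (\<lambda>h. D2u z h 1)" and l2: "linear (\<lambda>h. D2u z h \<i>)"
      using H2 has_derivative_linear by blast+
    have c4: "D2u z \<i> \<i> = - D2u z 1 1" using H4[of z] by linarith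
    have s: "D2u z \<i> 1 = D2u z 1 \<i>" using sym2[OF H1 H2 H3] by blast
    have "(\<lambda>h. complex_of_real (D2u z h 1) - \<i> * complex_of_real (D2u z h \<i>)) =
          (*) (complex_of_real (D2u z 1 1) - \<i> * complex_of_real (D2u z 1 \<i>))"
    proof
      fix h
      show "complex_of_real (D2u z h 1) - \<i> * complex_of_real (D2u z h \<i>) =
          (complex_of_real (D2u z 1 1) - \<i> * complex_of_real (D2u z 1 \<i>)) * h"
        using lin_decomp[OF l1, of h] lin_decomp[OF l2, of h] s c4
        by (simp add: complex_eq_iff algebra_simps)
    qed
    then show ?thesis using d by (simp add: has_field_derivative_def)
  qed
  then have holF: "F holomorphic_on UNIV"
    by (auto simp: holomorphic_on_open)
  obtain g where g: "\<And>x. (g has_field_derivative F x) (at x)"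
    using holomorphic_convex_primitive'[OF convex_UNIV open_UNIV holF] by auto
  have "((\<lambda>x. u x - Re (g x)) has_derivative (\<lambda>h. 0)) (at x within UNIV)" for x
  proof -
    have l: "linear (Du x)" using H1 has_derivative_linear by blast
    have d: "((\<lambda>x. u x - Re (g x)) has_derivative (\<lambda>h. Du x h - Re (F x * h))) (at x)"
      using g[of x] unfolding has_field_derivative_def
      by (auto intro!: derivative_eq_intros H1)
    have "(\<lambda>h. Du x h - Re (F x * h)) = (\<lambda>h. 0)"
    proof
      fix h show "Du x h - Re (F x * h) = 0"
        using lin_decomp[OF l, of h] by (simp add: F_def algebra_simps)
    qed
    then show ?thesis using d by simp
  qed
  then have "\<exists>c. \<forall>x\<in>UNIV. u x - Re (g x) = c"
    by (intro has_derivative_zero_constant[OF convex_UNIV])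
  then obtain c where c: "\<And>x. u x - Re (g x) = c" by blast
  have "g holomorphic_on UNIV" using g by (auto simp: holomorphic_on_open)
  then have "(\<lambda>x. g x + complex_of_real c) holomorphic_on UNIV"
    by (intro holomorphic_intros)
  moreover have "\<forall>z. Re (g z + complex_of_real c) = u z" using c by (simp add: algebra_simps)
  ultimately show ?thesis by blast
qed

lemma schwarz_scaled:
  fixes \<phi> :: "complex \<Rightarrow> complex"
  assumes hol: "\<phi> holomorphic_on ball c R" and R: "R > 0" and z0: "\<phi> c = 0"
    and lt: "\<And>x. x \<in> ball c R \<Longrightarrow> norm (\<phi> x) < 1" and p: "p \<in> ball c R"
  shows "norm (\<phi> p) * R \<le> dist c p"
proof -
  define \<psi> where "\<psi> \<xi> = \<phi> (c + complex_of_real R * \<xi>)" for \<xi>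
  have inb: "c + complex_of_real R * \<xi> \<in> ball c R" if "norm \<xi> < 1" for \<xi>
    using that R by (simp add: dist_norm norm_mult)
  have "\<psi> holomorphic_on ball 0 1"
    unfolding \<psi>_def
    by (rule holomorphic_on_compose_gen[OF _ hol, unfolded o_def]) (auto intro!: holomorphic_intros inb)
  moreover have "\<psi> 0 = 0" using z0 by (simp add: \<psi>_def)
  moreover have "\<And>\<xi>. norm \<xi> < 1 \<Longrightarrow> norm (\<psi> \<xi>) < 1" unfolding \<psi>_def using lt inb by blast
  moreover have n: "norm ((p - c) / complex_of_real R) < 1"
    using p R by (simp add: dist_norm norm_divide norm_minus_commute)
  ultimately have "norm (\<psi> ((p - c) / complex_of_real R)) \<le> norm ((p - c) / complex_of_real R)"
    by (rule Schwarz_Lemma(1))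
  moreover have "\<psi> ((p - c) / complex_of_real R) = \<phi> p" using R by (simp add: \<psi>_def)
  ultimately have "norm (\<phi> p) \<le> dist c p / R"
    using R by (simp add: dist_norm norm_divide norm_minus_commute)
  then show ?thesis using R by (simp add: field_simps)
qed

lemma norm_diff_lt_sum:
  fixes q :: complex and a :: real
  assumes "Re q > 0" "a > 0"
  shows "norm (q - complex_of_real a) < norm (q + complex_of_real a)"
proof -
  have e1: "(norm (q - complex_of_real a))\<^sup>2 = (Re q - a)\<^sup>2 + (Im q)\<^sup>2" by (simp add: cmod_power2)
  have e2: "(norm (q + complex_of_real a))\<^sup>2 = (Re q + a)\<^sup>2 + (Im q)\<^sup>2" by (simp add: cmod_power2)
  have "0 < Re q * a" using assms by simp
  then have "(Re q - a)\<^sup>2 < (Re q + a)\<^sup>2" by (simp add: power2_eq_square algebra_simps)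
  then have "(norm (q - complex_of_real a))\<^sup>2 < (norm (q + complex_of_real a))\<^sup>2"
    using e1 e2 by linarith
  then show ?thesis by (simp add: power_less_imp_less_base)
qed

lemma harn_alg:
  fixes x a t y d s :: real
  assumes xpos: "x > 0" and a: "a > 0" and t0: "0 \<le> t" and t1: "t < 1"
    and sq: "(x - a)\<^sup>2 + y\<^sup>2 = t\<^sup>2 * ((x + a)\<^sup>2 + y\<^sup>2)" and tS: "t * d \<le> s" and d: "d > 0"
  shows "x * (d + s) \<ge> a * (d - s)"
proof -
  have "t\<^sup>2 * y\<^sup>2 \<le> 1 * y\<^sup>2"
    using t0 t1 by (intro mult_right_mono) (auto simp: power_le_one)
  moreover have "(t * (x + a))\<^sup>2 = t\<^sup>2 * (x + a)\<^sup>2" by (simp only: power_mult_distrib)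
  moreover have "(x - a)\<^sup>2 + y\<^sup>2 = t\<^sup>2 * (x + a)\<^sup>2 + t\<^sup>2 * y\<^sup>2" using sq by (simp only: distrib_left)
  ultimately have sq2: "(x - a)\<^sup>2 \<le> (t * (x + a))\<^sup>2" by linarith
  have "\<bar>x - a\<bar> \<le> t * (x + a)"
    apply (rule power2_le_imp_le)
     apply (simp only: power2_abs sq2)
    using t0 xpos a apply simp
    done
  then have A: "a - x \<le> t * (x + a)" by linarith
  have "d * (a - x) \<le> d * (t * (x + a))" using A d by (intro mult_left_mono) auto
  also have "\<dots> = (t * d) * (x + a)" by simp
  also have "\<dots> \<le> s * (x + a)" using tS xpos a by (intro mult_right_mono) auto
  finally have "d * (a - x) \<le> s * (x + a)" .
  then show ?thesis by (simp add: algebra_simps)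
qed

lemma harnack:
  fixes f :: "complex \<Rightarrow> complex"
  assumes hol: "f holomorphic_on ball w d" and pos: "\<And>x. x \<in> ball w d \<Longrightarrow> Re (f x) > 0"
    and p: "p \<in> ball w d"
  shows "Re (f p) * (d + dist w p) \<ge> Re (f w) * (d - dist w p)"
proof -
  have d: "d > 0" using p by (metis dist_not_less_zero less_le_trans mem_ball not_le)
  have w: "w \<in> ball w d" using d by simp
  define a where "a = Re (f w)"
  have a: "a > 0" using pos[OF w] by (simp add: a_def)
  define g where "g x = f x - \<i> * complex_of_real (Im (f w))" for x
  have Reg: "Re (g x) = Re (f x)" for x by (simp add: g_def)
  have gw: "g w = complex_of_real a" by (simp add: g_def a_def complex_eq_iff)
  define \<phi> where "\<phi> x = (g x - complex_of_real a) / (g x + complex_of_real a)" for x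
  have nz: "g x + complex_of_real a \<noteq> 0" if "x \<in> ball w d" for x
  proof
    assume "g x + complex_of_real a = 0"
    then have "Re (g x) + a = 0" by (metis Re_complex_of_real plus_complex.sel(1) zero_complex.sel(1))
    then show False using pos[OF that] a Reg[of x] by linarith
  qed
  have hol\<phi>: "\<phi> holomorphic_on ball w d"
    unfolding \<phi>_def g_def using nz unfolding g_def
    by (intro holomorphic_intros hol) auto
  have lt: "norm (\<phi> x) < 1" if "x \<in> ball w d" for x
  proof -
    have "norm (g x - complex_of_real a) < norm (g x + complex_of_real a)"
      using norm_diff_lt_sum[of "g x" a] pos[OF that] Reg a by simp
    then show ?thesis using nz[OF that] by (simp add: \<phi>_def norm_divide divide_less_eq)
  qed
  have "\<phi> w = 0" by (simp add: \<phi>_def gw)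
  from schwarz_scaled[OF hol\<phi> d this lt p]
  have tS: "norm (\<phi> p) * d \<le> dist w p" .
  define q where "q = g p"
  define t where "t = norm (\<phi> p)"
  have t0: "t \<ge> 0" by (simp add: t_def)
  have eq: "norm (q - complex_of_real a) = t * norm (q + complex_of_real a)"
    using nz[OF p] by (simp add: t_def \<phi>_def q_def norm_divide)
  define x where "x = Re q"
  have xpos: "x > 0" using pos[OF p] Reg by (simp add: x_def q_def)
  have t1: "t < 1" using lt[OF p] by (simp add: t_def)
  have sq: "(x - a)\<^sup>2 + (Im q)\<^sup>2 = t\<^sup>2 * ((x + a)\<^sup>2 + (Im q)\<^sup>2)"
  proof -
    have "(norm (q - complex_of_real a))\<^sup>2 = t\<^sup>2 * (norm (q + complex_of_real a))\<^sup>2"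
      using eq by (simp add: power_mult_distrib)
    then show ?thesis by (simp add: cmod_power2 x_def)
  qed
  have "x * (d + dist w p) \<ge> a * (d - dist w p)"
    by (rule harn_alg[OF xpos a t0 t1 sq _ d]) (use tS in \<open>simp add: t_def\<close>)
  then show ?thesis by (simp add: x_def q_def Reg a_def)
qed

lemma borel_car:
  fixes g :: "complex \<Rightarrow> complex"
  assumes hol: "g holomorphic_on ball z R" and g0: "g z = 0" and A: "A > 0"
    and up: "\<And>x. x \<in> ball z R \<Longrightarrow> Re (g x) < A" and p: "p \<in> ball z R"
  shows "norm (g p) * (R - dist z p) \<le> 2 * A * dist z p"
proof -
  have R: "R > 0" using p by (metis dist_not_less_zero less_le_trans mem_ball not_le)
  define \<phi> where "\<phi> x = g x / (complex_of_real (2 * A) - g x)" for x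
  have nz: "complex_of_real (2 * A) - g x \<noteq> 0" if "x \<in> ball z R" for x
  proof
    assume "complex_of_real (2 * A) - g x = 0"
    then have "Re (g x) = 2 * A" by (metis Re_complex_of_real eq_iff_diff_eq_0)
    then show False using up[OF that] A by linarith
  qed
  have hol\<phi>: "\<phi> holomorphic_on ball z R"
    unfolding \<phi>_def using nz by (intro holomorphic_intros hol) auto
  have lt: "norm (\<phi> x) < 1" if "x \<in> ball z R" for x
  proof -
    have e1: "(norm (g x))\<^sup>2 = (Re (g x))\<^sup>2 + (Im (g x))\<^sup>2" by (simp add: cmod_power2)
    have e2: "(norm (complex_of_real (2 * A) - g x))\<^sup>2 = (2 * A - Re (g x))\<^sup>2 + (Im (g x))\<^sup>2"
      by (simp add: cmod_power2)
    have "0 < A * (A - Re (g x))" using up[OF that] A by simp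
    then have "(Re (g x))\<^sup>2 < (2 * A - Re (g x))\<^sup>2" by (simp add: power2_eq_square algebra_simps)
    then have "(norm (g x))\<^sup>2 < (norm (complex_of_real (2 * A) - g x))\<^sup>2"
      using e1 e2 by linarith
    then have "norm (g x) < norm (complex_of_real (2 * A) - g x)"
      by (simp add: power_less_imp_less_base)
    then show ?thesis using nz[OF that] by (simp add: \<phi>_def norm_divide divide_less_eq)
  qed
  have "\<phi> z = 0" by (simp add: \<phi>_def g0)
  from schwarz_scaled[OF hol\<phi> R this lt p]
  have tS: "norm (\<phi> p) * R \<le> dist z p" .
  have eq: "norm (g p) = norm (\<phi> p) * norm (complex_of_real (2 * A) - g p)"
    using nz[OF p] by (simp add: \<phi>_def norm_divide)
  also have "\<dots> \<le> norm (\<phi> p) * (2 * A + norm (g p))"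
    using A by (intro mult_left_mono) (auto intro: order.trans[OF norm_triangle_ineq4])
  finally have "R * norm (g p) \<le> R * (norm (\<phi> p) * (2 * A + norm (g p)))"
    using R by (intro mult_left_mono) auto
  also have "\<dots> = (norm (\<phi> p) * R) * (2 * A + norm (g p))" by simp
  also have "\<dots> \<le> dist z p * (2 * A + norm (g p))"
    using tS A by (intro mult_right_mono) auto
  finally show ?thesis by (simp add: algebra_simps)
qed

lemma cont_re:
  assumes hol: "f holomorphic_on UNIV" and re: "\<And>z. Re (f z) = u z"
  shows "continuous_on UNIV u"
proof -
  have "u = (\<lambda>z. Re (f z))" using re by auto
  moreover have "continuous_on UNIV (\<lambda>z. Re (f z))"
    using holomorphic_on_imp_continuous_on[OF hol] by (intro continuous_intros)
  ultimately show ?thesis by simp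
qed

lemma bdd_cont:
  fixes h :: "complex \<Rightarrow> real"
  assumes "continuous_on UNIV h"
  shows "bdd_above (h ` ball z r)"
proof -
  have "compact (h ` cball z r)"
    using assms by (intro compact_continuous_image) (auto intro: continuous_on_subset)
  then have "bdd_above (h ` cball z r)" by (intro bounded_imp_bdd_above compact_imp_bounded)
  then show ?thesis by (rule bdd_above_mono) auto
qed

lemma Msup_ge:
  assumes "bdd_above (h ` ball z r)" "w \<in> ball z r"
  shows "h w \<le> Msup h z r"
  unfolding Msup_def using assms by (rule cSUP_upper2) simp

lemma Msup_le:
  assumes "r > 0" "\<And>w. w \<in> ball z r \<Longrightarrow> h w \<le> B"
  shows "Msup h z r \<le> B"
  unfolding Msup_def using assms by (intro cSUP_least) auto

lemma Msup_gt:
  assumes "r > 0" "B < Msup h z r"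
  shows "\<exists>w\<in>ball z r. B < h w"
  using Msup_le[of r z h B] assms by force

lemma Msup_mono:
  assumes "bdd_above (h ` ball z r2)" "r1 > 0" "r1 \<le> r2"
  shows "Msup h z r1 \<le> Msup h z r2"
  using assms by (intro Msup_le Msup_ge) auto

lemma sign_const:
  fixes u :: "complex \<Rightarrow> real"
  assumes cont: "continuous_on UNIV u" and nz: "\<And>y. y \<in> ball w d \<Longrightarrow> u y \<noteq> 0"
    and uw: "u w > 0" and y: "y \<in> ball w d"
  shows "u y > 0"
proof (rule ccontr)
  assume "\<not> u y > 0"
  have w: "w \<in> ball w d" using y by (metis centre_in_ball dist_not_less_zero less_le_trans mem_ball not_le)
  have "connected (u ` ball w d)"
    using cont by (intro connected_continuous_image) (auto intro: continuous_on_subset)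
  then have "0 \<in> u ` ball w d"
    unfolding connected_iff_interval using \<open>\<not> u y > 0\<close> uw w y by (meson imageI less_le not_le)
  then show False using nz by auto
qed

lemma liou:
  assumes hol: "f holomorphic_on UNIV" and up: "\<And>w. Re (f w) \<le> T"
  shows "\<exists>c. \<forall>w. Re (f w) = c"
proof -
  have "bounded (range (\<lambda>w. exp (f w)))"
    unfolding bounded_iff using up by (intro exI[of _ "exp T"]) auto
  moreover have "(\<lambda>w. exp (f w)) holomorphic_on UNIV" using hol by (intro holomorphic_intros)
  ultimately have "(\<lambda>w. exp (f w)) constant_on UNIV" using Liouville_theorem by blast
  then obtain k where k: "\<And>w. exp (f w) = k" unfolding constant_on_def by blast
  have "Re (f w) = ln (norm k)" for w
    using k[of w, symmetric] by simp
  then show ?thesis by blast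
qed

lemma alg_contra:
  fixes X h d s :: real
  assumes "X * (d - s) \<le> h * (d + s)" "X > 12 * h" "h \<ge> 0" "0 \<le> s" "6 * s \<le> 5 * d" "d > 0"
  shows False
proof -
  have ds: "d - s > 0" using assms by linarith
  have "12 * h * (d - s) < X * (d - s)" using assms(2) ds by (intro mult_strict_right_mono) auto
  then have "12 * h * (d - s) < h * (d + s)" using assms(1) by linarith
  then have "0 < h * (13 * s - 11 * d)" by (simp add: algebra_simps)
  moreover have "h * (13 * s - 11 * d) \<le> 0"
    using assms by (intro mult_nonneg_nonpos) auto
  ultimately show False by linarith
qed

lemma step:
  fixes u :: "complex \<Rightarrow> real"
  assumes hol: "f holomorphic_on UNIV" and re: "\<And>z. Re (f z) = u z"
    and z: "u z = 0" and r: "r > 0"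
    and bad: "Msup (\<lambda>w. \<bar>u w\<bar>) z r > 12 * Msup (\<lambda>w. \<bar>u w\<bar>) z (2*r/3)"
  shows "\<exists>z'. u z' = 0 \<and> dist z z' < 3*r/2 \<and>
           Msup (\<lambda>w. \<bar>u w\<bar>) z' (2*(4*r/5)/3) > 12 * Msup (\<lambda>w. \<bar>u w\<bar>) z (2*r/3)"
proof -
  have cont: "continuous_on UNIV u" by (rule cont_re[OF hol re])
  have conta: "continuous_on UNIV (\<lambda>w. \<bar>u w\<bar>)" using cont by (intro continuous_intros)
  have bdd: "\<And>c \<rho>. bdd_above ((\<lambda>w. \<bar>u w\<bar>) ` ball c \<rho>)" by (rule bdd_cont[OF conta])
  define h where "h = Msup (\<lambda>w. \<bar>u w\<bar>) z (2*r/3)"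
  obtain w where w: "w \<in> ball z r" "\<bar>u w\<bar> > 12 * h"
    using Msup_gt[OF r] bad unfolding h_def by blast
  have h0: "h \<ge> 0"
  proof -
    have "\<bar>u z\<bar> \<le> h" unfolding h_def using r by (intro Msup_ge[OF bdd]) auto
    then show ?thesis by simp
  qed
  have closedZ: "closed {x. u x = 0}" using closed_Collect_eq[OF cont continuous_on_const] by simp
  obtain z' where z': "z' \<in> {x. u x = 0}" and near: "\<And>y. y \<in> {x. u x = 0} \<Longrightarrow> dist w z' \<le> dist w y"
    using distance_attains_inf[OF closedZ, of w] z by blast
  define d where "d = dist w z'"
  have dlt: "d < r" using near[of z] z w(1) by (simp add: d_def dist_commute)
  show ?thesis
  proof (cases "d < r/2")
    case True
    have "dist w z' < 2*(4*r/5)/3" using True r unfolding d_def by linarith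
    then have "w \<in> ball z' (2*(4*r/5)/3)" by (simp add: dist_commute)
    then have "\<bar>u w\<bar> \<le> Msup (\<lambda>w. \<bar>u w\<bar>) z' (2*(4*r/5)/3)" by (intro Msup_ge[OF bdd])
    moreover have "dist z z' < 3*r/2"
      using dist_triangle[of z z' w] w(1) True by (simp add: d_def dist_commute)
    ultimately show ?thesis using z' w(2) unfolding h_def by auto
  next
    case False
    then have dge: "d \<ge> r/2" by simp
    have nz: "u y \<noteq> 0" if "y \<in> ball w d" for y
    proof
      assume "u y = 0"
      then have "d \<le> dist w y" using near[of y] by (simp add: d_def)
      then show False using that by simp
    qed
    have uw0: "u w \<noteq> 0" using w(2) h0 by auto
    have far: "dist z w \<ge> 2*r/3"
    proof (rule ccontr)
      assume "\<not> dist z w \<ge> 2*r/3"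
      then have "\<bar>u w\<bar> \<le> h" unfolding h_def by (intro Msup_ge[OF bdd]) simp
      then show False using w(2) h0 by linarith
    qed
    define c where "c = (7*r/12) / dist z w"
    define p where "p = z + complex_of_real c * (w - z)"
    have dzw: "dist z w > 0" using far r by linarith
    have c01: "0 < c" "c < 1" using far r dzw by (auto simp: c_def field_simps)
    have dzp: "dist z p = 7*r/12"
    proof -
      have "dist z p = norm (complex_of_real c * (w - z))" by (simp add: p_def dist_norm)
      also have "\<dots> = c * dist z w" using c01 by (simp add: norm_mult dist_norm norm_minus_commute)
      also have "\<dots> = 7*r/12" using dzw by (simp add: c_def)
      finally show ?thesis .
    qed
    have dwp: "dist w p = dist z w - 7*r/12"
    proof -
      have "w - p = complex_of_real (1 - c) * (w - z)" by (simp add: p_def algebra_simps)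
      moreover have "norm (complex_of_real (1 - c)) = 1 - c" using c01 by (simp only: norm_of_real)
      ultimately have "dist w p = (1 - c) * dist z w"
        by (simp add: dist_norm norm_mult norm_minus_commute del: of_real_diff)
      also have "\<dots> = dist z w - 7*r/12" using dzw by (simp add: c_def algebra_simps)
      finally show ?thesis .
    qed
    have s_lt: "dist w p < 5*r/12" using dwp w(1) by (simp add: dist_commute)
    have s_ge: "dist w p \<ge> 0" by simp
    have "dist w p < d" using s_lt dge r by linarith
    then have pin: "p \<in> ball w d" by simp
    have up: "\<bar>u p\<bar> \<le> h" unfolding h_def using dzp r by (intro Msup_ge[OF bdd]) simp
    have holb: "f holomorphic_on ball w d" using hol by (rule holomorphic_on_subset) simp
    have key: "\<bar>u w\<bar> * (d - dist w p) \<le> \<bar>u p\<bar> * (d + dist w p)"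
    proof (cases "u w > 0")
      case True
      have pos: "\<And>y. y \<in> ball w d \<Longrightarrow> Re (f y) > 0"
        using sign_const[OF cont nz True] re by simp
      have "Re (f p) * (d + dist w p) \<ge> Re (f w) * (d - dist w p)"
        by (rule harnack[OF holb pos pin])
      moreover have "u p > 0" using pos[OF pin] re by simp
      ultimately show ?thesis using True re by simp
    next
      case False
      then have neg: "- u w > 0" using uw0 by simp
      have cont': "continuous_on UNIV (\<lambda>x. - u x)" using cont by (intro continuous_intros)
      have nz': "\<And>y. y \<in> ball w d \<Longrightarrow> - u y \<noteq> 0" using nz by simp
      have pos: "\<And>y. y \<in> ball w d \<Longrightarrow> Re (- f y) > 0"
        using sign_const[OF cont' nz' neg] re by simp
      have holb': "(\<lambda>x. - f x) holomorphic_on ball w d" using holb by (intro holomorphic_intros)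
      have "Re (- f p) * (d + dist w p) \<ge> Re (- f w) * (d - dist w p)"
        by (rule harnack[OF holb' pos pin])
      moreover have "u p < 0" using pos[OF pin] re by simp
      ultimately show ?thesis using neg re by simp
    qed
    have key2: "\<bar>u w\<bar> * (d - dist w p) \<le> h * (d + dist w p)"
    proof -
      have "\<bar>u p\<bar> * (d + dist w p) \<le> h * (d + dist w p)"
        using up dge r s_ge by (intro mult_right_mono) auto
      then show ?thesis using key by linarith
    qed
    have "6 * dist w p \<le> 5 * d" using s_lt dge by linarith
    moreover have "d > 0" using dge r by linarith
    ultimately have False using alg_contra[OF key2 w(2) h0 s_ge] by blast
    then show ?thesis ..
  qed
qed

lemma doubling:
  fixes u :: "complex \<Rightarrow> real"
  assumes hol: "f holomorphic_on UNIV" and re: "\<And>z. Re (f z) = u z"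
    and z0: "u z0 = 0" and r0: "r0 > 0" and H: "Msup (\<lambda>w. \<bar>u w\<bar>) z0 (2*r0/3) > 0"
  shows "\<exists>z r. u z = 0 \<and> r > 0 \<and> Msup (\<lambda>w. \<bar>u w\<bar>) z r \<le> 12 * Msup (\<lambda>w. \<bar>u w\<bar>) z (2*r/3)
            \<and> Msup (\<lambda>w. \<bar>u w\<bar>) z (2*r/3) \<ge> Msup (\<lambda>w. \<bar>u w\<bar>) z0 (2*r0/3)"
proof (rule ccontr)
  assume neg: "\<not> ?thesis"
  define G where "G z r = Msup (\<lambda>w. \<bar>u w\<bar>) z r" for z r
  define H0 where "H0 = G z0 (2*r0/3)"
  have H0: "H0 > 0" using H by (simp add: H0_def G_def)
  have cont: "continuous_on UNIV u" by (rule cont_re[OF hol re])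
  have ind: "\<exists>z. u z = 0 \<and> dist z0 z \<le> 15/2 * r0 * (1 - (4/5)^n) \<and> G z (2*(r0*(4/5)^n)/3) \<ge> 12^n * H0" for n
  proof (induction n)
    case 0
    then show ?case using z0 by (auto simp: H0_def)
  next
    case (Suc n)
    then obtain z where z: "u z = 0" "dist z0 z \<le> 15/2 * r0 * (1 - (4/5)^n)"
      "G z (2*(r0*(4/5)^n)/3) \<ge> 12^n * H0" by blast
    define r where "r = r0*(4/5)^n"
    have r: "r > 0" using r0 by (simp add: r_def)
    have "(1::real) \<le> 12^n" by simp
    then have "1 * H0 \<le> 12^n * H0" using H0 by (intro mult_right_mono) auto
    then have hge: "G z (2*r/3) \<ge> H0" using z(3) by (simp add: r_def)
    have "\<not> G z r \<le> 12 * G z (2*r/3)"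
      using neg z(1) r hge unfolding G_def H0_def by blast
    then have bad: "G z r > 12 * G z (2*r/3)" by simp
    obtain z' where z': "u z' = 0" "dist z z' < 3*r/2" "G z' (2*(4*r/5)/3) > 12 * G z (2*r/3)"
      using step[OF hol re z(1) r bad[unfolded G_def]] unfolding G_def by blast
    have e1: "4*r/5 = r0*(4/5)^Suc n" by (simp add: r_def)
    have "dist z0 z' \<le> dist z0 z + dist z z'" by (rule dist_triangle)
    also have "\<dots> \<le> 15/2 * r0 * (1 - (4/5)^n) + 3/2 * r0 * (4/5)^n"
      using z(2) z'(2) by (simp add: r_def)
    also have "\<dots> = 15/2 * r0 * (1 - (4/5)^Suc n)" by (simp add: algebra_simps)
    finally have d': "dist z0 z' \<le> 15/2 * r0 * (1 - (4/5)^Suc n)" .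
    have "12^Suc n * H0 = 12 * (12^n * H0)" by simp
    also have "\<dots> \<le> 12 * G z (2*r/3)" using z(3) by (simp add: r_def)
    also have "\<dots> < G z' (2*(4*r/5)/3)" by (rule z'(3))
    finally have "12^Suc n * H0 \<le> G z' (2*(r0*(4/5)^Suc n)/3)" by (simp add: e1)
    then show ?case using z'(1) d' by blast
  qed
  have "compact ((\<lambda>w. \<bar>u w\<bar>) ` cball z0 (9*r0))"
    using cont by (intro compact_continuous_image continuous_intros) (auto intro: continuous_on_subset)
  then obtain B where B: "\<And>w. w \<in> cball z0 (9*r0) \<Longrightarrow> \<bar>u w\<bar> \<le> B"
    using compact_imp_bounded[THEN bounded_imp_bdd_above] unfolding bdd_above_def by fastforce
  have bound: "12^n * H0 \<le> B" for n
  proof -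
    obtain z where z: "u z = 0" "dist z0 z \<le> 15/2 * r0 * (1 - (4/5)^n)" "G z (2*(r0*(4/5)^n)/3) \<ge> 12^n * H0"
      using ind by blast
    have q: "(4/5::real)^n \<le> 1" "(0::real) \<le> (4/5)^n" by (auto simp: power_le_one)
    have rp: "2*(r0*(4/5)^n)/3 > 0" using r0 by simp
    have "G z (2*(r0*(4/5)^n)/3) \<le> B"
      unfolding G_def
    proof (rule Msup_le[OF rp])
      fix w assume w: "w \<in> ball z (2*(r0*(4/5)^n)/3)"
      have "dist z0 w \<le> dist z0 z + dist z w" by (rule dist_triangle)
      also have "\<dots> \<le> 15/2 * r0 + 2*r0/3"
      proof -
        have "15/2 * r0 * (1 - (4/5)^n) \<le> 15/2 * r0" using q r0 by (simp add: mult_left_le)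
        moreover have "r0*(4/5)^n \<le> r0" using q r0 by (simp add: mult_left_le)
        ultimately show ?thesis using z(2) w by simp
      qed
      also have "\<dots> \<le> 9 * r0" using r0 by simp
      finally show "\<bar>u w\<bar> \<le> B" using B by simp
    qed
    then show ?thesis using z(3) by simp
  qed
  obtain n where n: "B / H0 < 12^n" using real_arch_pow[of 12 "B / H0"] by auto
  then have "B < 12^n * H0" using H0 by (simp add: divide_less_eq)
  then show False using bound[of n] by simp
qed

lemma bc_final:
  fixes u :: "complex \<Rightarrow> real"
  assumes hol: "f holomorphic_on UNIV" and re: "\<And>z. Re (f z) = u z"
    and z: "u z = 0" and r: "r > 0"
  shows "Msup (\<lambda>w. \<bar>u w\<bar>) z (2*r/3) \<le> 16 * Msup u z (3*r/4)"
proof -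
  have cont: "continuous_on UNIV u" by (rule cont_re[OF hol re])
  define R where "R = 3*r/4"
  define A0 where "A0 = Msup u z R"
  have bddu: "bdd_above (u ` ball z R)" by (rule bdd_cont[OF cont])
  have A0: "A0 \<ge> 0" using Msup_ge[OF bddu, of z] z r by (simp add: A0_def R_def)
  have "2*r/3 > 0" using r by simp
  then have "Msup (\<lambda>w. \<bar>u w\<bar>) z (2*r/3) \<le> 16 * A0"
  proof (rule Msup_le)
    fix p assume p: "p \<in> ball z (2*r/3)"
    define s where "s = dist z p"
    have s: "s < 2*r/3" "s \<ge> 0" using p by (auto simp: s_def)
    have pR: "p \<in> ball z R" using p r by (simp add: R_def)
    have "\<bar>u p\<bar> \<le> 16 * A0 + e" if e: "e > 0" for e
    proof -
      define A where "A = A0 + e/16"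
      have A: "A > 0" using A0 e by (simp add: A_def)
      define g where "g x = f x - f z" for x
      have holg: "g holomorphic_on ball z R" unfolding g_def
        by (intro holomorphic_intros holomorphic_on_subset[OF hol]) auto
      have g0: "g z = 0" by (simp add: g_def)
      have up: "Re (g x) < A" if "x \<in> ball z R" for x
      proof -
        have "u x \<le> A0" unfolding A0_def by (rule Msup_ge[OF bddu that])
        then show ?thesis using re[of x] re[of z] z e by (simp add: g_def A_def)
      qed
      have bc: "norm (g p) * (R - s) \<le> 2 * A * s"
        using borel_car[OF holg g0 A up pR] by (simp add: s_def)
      have "\<bar>u p\<bar> \<le> norm (g p)"
        using abs_Re_le_cmod[of "g p"] re[of p] re[of z] z by (simp add: g_def)
      then have "\<bar>u p\<bar> * (R - s) \<le> norm (g p) * (R - s)"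
        using s by (intro mult_right_mono) (auto simp: R_def)
      also have "\<dots> \<le> 2 * A * s" by (rule bc)
      also have "\<dots> \<le> 16 * A * (R - s)"
      proof -
        have "2 * s \<le> 16 * (R - s)" using s by (simp add: R_def)
        then show ?thesis using A by (simp add: mult.assoc mult_left_mono)
      qed
      finally have "\<bar>u p\<bar> * (R - s) \<le> (16 * A) * (R - s)" by simp
      moreover have "R - s > 0" using s r by (simp add: R_def)
      ultimately have "\<bar>u p\<bar> \<le> 16 * A" by simp
      then show ?thesis by (simp add: A_def algebra_simps)
    qed
    then show "\<bar>u p\<bar> \<le> 16 * A0" by (rule field_le_epsilon)
  qed
  then show ?thesis by (simp add: A0_def R_def)
qed

theorem corollary5:
  shows "\<exists>C0::real. C0 > 0 \<and>
    (\<forall>u. harmonic u \<and> \<not> (\<exists>c. \<forall>z. u z = c) \<longrightarrow>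
      (\<exists>(zs::nat \<Rightarrow> complex) (rs::nat \<Rightarrow> real).
         (\<forall>n. rs n > 0 \<and> u (zs n) = 0 \<and>
              Msup (\<lambda>w. \<bar>u w\<bar>) (zs n) (rs n) \<le> C0 * Msup u (zs n) (3/4 * rs n)) \<and>
         filterlim (\<lambda>n. Msup u (zs n) (rs n)) at_top sequentially))"
proof (intro exI[of _ 192] conjI allI impI)
  show "(192::real) > 0" by simp
  fix u assume asm: "harmonic u \<and> \<not> (\<exists>c. \<forall>z. u z = c)"
  obtain f where hol: "f holomorphic_on UNIV" and re: "\<And>z. Re (f z) = u z"
    using harmonic_re asm by blast
  have nc: "\<not> (\<exists>c. \<forall>z. u z = c)" using asm by blast
  have cont: "continuous_on UNIV u" by (rule cont_re[OF hol re])
  have above: "\<exists>w. u w > T" for T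
  proof (rule ccontr)
    assume "\<not> (\<exists>w. u w > T)"
    then have "\<And>w. Re (f w) \<le> T" using re by (simp add: not_less)
    then obtain c where "\<forall>w. Re (f w) = c" using liou[OF hol] by blast
    then show False using nc re by auto
  qed
  have below: "\<exists>w. u w < T" for T
  proof (rule ccontr)
    assume "\<not> (\<exists>w. u w < T)"
    then have "\<And>w. Re (- f w) \<le> - T" using re by (simp add: not_less)
    moreover have "(\<lambda>w. - f w) holomorphic_on UNIV" using hol by (intro holomorphic_intros)
    ultimately obtain c where "\<forall>w. Re (- f w) = c" using liou by blast
    then have "\<forall>w. u w = - c" using re by (metis add.inverse_inverse uminus_complex.sel(1))
    then show False using nc by blast
  qed
  obtain a where a: "u a > 0" using above by blast
  obtain b where b: "u b < 0" using below by blast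
  have "connected (u ` UNIV)" using cont by (intro connected_continuous_image) auto
  then have "0 \<in> range u" unfolding connected_iff_interval using a b
    by (metis UNIV_I imageI less_le)
  then obtain z0 where z0: "u z0 = 0" by auto
  have ex: "\<exists>z r. u z = 0 \<and> r > 0 \<and> Msup (\<lambda>w. \<bar>u w\<bar>) z r \<le> 12 * Msup (\<lambda>w. \<bar>u w\<bar>) z (2*r/3)
            \<and> Msup (\<lambda>w. \<bar>u w\<bar>) z (2*r/3) \<ge> 192 * real n" for n
  proof -
    obtain w where w: "u w > 192 * real n + 1" using above by blast
    define r0 where "r0 = 3/2 * (dist z0 w + 1)"
    have r0: "r0 > 0" by (simp add: r0_def add_nonneg_pos)
    have conta: "continuous_on UNIV (\<lambda>w. \<bar>u w\<bar>)" using cont by (intro continuous_intros)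
    have "w \<in> ball z0 (2*r0/3)" by (simp add: r0_def)
    then have "\<bar>u w\<bar> \<le> Msup (\<lambda>w. \<bar>u w\<bar>) z0 (2*r0/3)" by (intro Msup_ge bdd_cont[OF conta])
    then have H: "Msup (\<lambda>w. \<bar>u w\<bar>) z0 (2*r0/3) > 192 * real n" using w by simp
    then have "Msup (\<lambda>w. \<bar>u w\<bar>) z0 (2*r0/3) > 0"
      by (metis of_nat_0_le_iff mult_nonneg_nonneg le_less_trans zero_le_numeral)
    from doubling[OF hol re z0 r0 this] H show ?thesis by force
  qed
  then obtain zs rs where P: "\<And>n. u (zs n) = 0 \<and> rs n > 0
      \<and> Msup (\<lambda>w. \<bar>u w\<bar>) (zs n) (rs n) \<le> 12 * Msup (\<lambda>w. \<bar>u w\<bar>) (zs n) (2*rs n/3)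
      \<and> Msup (\<lambda>w. \<bar>u w\<bar>) (zs n) (2*rs n/3) \<ge> 192 * real n"
    by metis
  have main: "Msup (\<lambda>w. \<bar>u w\<bar>) (zs n) (rs n) \<le> 192 * Msup u (zs n) (3/4 * rs n)" for n
  proof -
    have "Msup (\<lambda>w. \<bar>u w\<bar>) (zs n) (rs n) \<le> 12 * Msup (\<lambda>w. \<bar>u w\<bar>) (zs n) (2*rs n/3)"
      using P by blast
    also have "\<dots> \<le> 12 * (16 * Msup u (zs n) (3*rs n/4))"
      using bc_final[OF hol re, of "zs n" "rs n"] P by simp
    finally show ?thesis by (simp add: mult.assoc)
  qed
  show "\<exists>zs rs. (\<forall>n. rs n > 0 \<and> u (zs n) = 0 \<and>
              Msup (\<lambda>w. \<bar>u w\<bar>) (zs n) (rs n) \<le> 192 * Msup u (zs n) (3/4 * rs n)) \<and>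
         filterlim (\<lambda>n. Msup u (zs n) (rs n)) at_top sequentially"
  proof (intro exI conjI allI)
    fix n
    show "rs n > 0" "u (zs n) = 0" using P by blast+
    show "Msup (\<lambda>w. \<bar>u w\<bar>) (zs n) (rs n) \<le> 192 * Msup u (zs n) (3/4 * rs n)" by (rule main)
  next
    have "real n \<le> Msup u (zs n) (rs n)" for n
    proof -
      have rp: "rs n > 0" using P by blast
      have bddu: "bdd_above (u ` ball (zs n) (rs n))" by (rule bdd_cont[OF cont])
      have conta: "continuous_on UNIV (\<lambda>w. \<bar>u w\<bar>)" using cont by (intro continuous_intros)
      have "192 * real n \<le> Msup (\<lambda>w. \<bar>u w\<bar>) (zs n) (2*rs n/3)" using P by blast
      also have "\<dots> \<le> Msup (\<lambda>w. \<bar>u w\<bar>) (zs n) (rs n)"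
        using rp by (intro Msup_mono bdd_cont[OF conta]) auto
      also have "\<dots> \<le> 192 * Msup u (zs n) (3/4 * rs n)" by (rule main)
      also have "\<dots> \<le> 192 * Msup u (zs n) (rs n)"
        using rp by (intro mult_left_mono Msup_mono[OF bddu]) auto
      finally show ?thesis by simp
    qed
    then show "filterlim (\<lambda>n. Msup u (zs n) (rs n)) at_top sequentially"
      by (intro filterlim_at_top_mono[OF filterlim_real_sequentially]) auto
  qed
qed

end
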